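(* Let $m\in\mathbb{N}$, let $\|\cdot\|_{\mathbb{R}^m}$ be a norm on $\mathbb{R}^m$ with dual norm $\|\cdot\|^*_{\mathbb{R}^m}$, let $\mathbf{a}_j=(a_{j,k}:k\in\mathbb{N})$, $j\in\{1,\dots,m\}$, be linearly independent elements of $c_0(\mathbb{N})$, and let $A$ be the semi-infinite matrix with rows $\mathbf{a}_1,\dots,\mathbf{a}_m$, viewed as the operator $\ell_1(\mathbb{N})\to\mathbb{R}^m$, $A\mathbf{x}=\big(\sum_{k}a_{j,k}x_k\big)_{j=1}^m$. Let $\mathbf{y}_0=(y_j)_{j=1}^m\in\mathbb{R}^m$, $\rho>0$, $p\in[1,+\infty)$, and let $p'\in(1,+\infty]$ satisfy $1/p+1/p'=1$. Let $\hat\lambda\in\mathbb{R}^m$ be a solution of the dual problem $$\sup\Big\{\sum_{j=1}^m y_j\lambda_j:\ \lambda\in\mathbb{R}^m,\ \Big\|\Big(\|\lambda\|^*_{\mathbb{R}^m},\ \Big\|\rho^{-1/p}\sum_{j=1}^m\lambda_j\mathbf{a}_j\Big\|_\infty\Big)\Big\|_{p'}\le1\Big\},$$ where $\|(s,t)\|_{p'}=(s^{p'}+t^{p'})^{1/p'}$ for $p'<\infty$ and $\max\{s,t\}$ for $p'=\infty$. Let $\hat\mu:=\sum_{j=1}^m\hat\lambda_j\mathbf{a}_j\in c_0(\mathbb{N})$ and write $\mathbb{N}(\hat\mu):=\{k\in\mathbb{N}:|\hat\mu_k|=\|\hat\mu\|_\infty\}=\{k_1,\dots,k_n\}$. Let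 $A_{\hat\mu}\in\mathbb{R}^{m\times n}$ be the matrix with entries $(A_{\hat\mu})_{ij}=a_{i,k_j}$. If $\hat{\mathbf{z}}=(\hat z_1,\dots,\hat z_n)$ is a solution of $$\inf\{(\|\mathbf{y}_0-A_{\hat\mu}\mathbf{z}\|^p_{\mathbb{R}^m}+\rho\|\mathbf{z}\|_1^p)^{1/p}:\mathbf{z}\in\mathbb{R}^n\},$$ then the sequence $\hat{\mathbf{x}}=(\hat x_k:k\in\mathbb{N})$ defined by $\hat x_{k_j}:=\hat z_j$ for $j=1,\dots,n$ and $\hat x_k:=0$ for $k\notin\mathbb{N}(\hat\mu)$ is a solution of $$\inf\{(\|\mathbf{y}_0-A\mathbf{x}\|^p_{\mathbb{R}^m}+\rho\|\mathbf{x}\|_1^p)^{1/p}:\mathbf{x}\in\ell_1(\mathbb{N})\}.$$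
   Context: $\ell_1(\mathbb{N})$ is the space of real sequences with $\|\mathbf{x}\|_1=\sum_k|x_k|<\infty$; $c_0(\mathbb{N})$ is the space of real sequences tending to $0$ with $\|\mathbf{c}\|_\infty=\sup_k|c_k|$. For $\mathbf{z}\in\mathbb{R}^n$, $\|\mathbf{z}\|_1=\sum_j|z_j|$. The dual norm is $\|\lambda\|^*_{\mathbb{R}^m}=\sup\{\sum_j\lambda_jy_j:\|\mathbf{y}\|_{\mathbb{R}^m}\le1\}$. *)

theory Defs
  imports "HOL-Analysis.Analysis" "HOL-Library.Extended_Real"
begin

definition is_norm :: "(real^'m \<Rightarrow> real) \<Rightarrow> bool" where
  "is_norm N \<longleftrightarrow>
     (\<forall>x. 0 \<le> N x) \<and> (\<forall>x. N x = 0 \<longleftrightarrow> x = 0) \<and>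
     (\<forall>c x. N (c *\<^sub>R x) = \<bar>c\<bar> * N x) \<and> (\<forall>x y. N (x + y) \<le> N x + N y)"

definition dual_norm :: "(real^'m \<Rightarrow> real) \<Rightarrow> real^'m \<Rightarrow> real" where
  "dual_norm N l = Sup {(\<Sum>j\<in>UNIV. l$j * y$j) | y. N y \<le> 1}"

definition sup_norm :: "(nat \<Rightarrow> real) \<Rightarrow> real" where
  "sup_norm f = (SUP k. \<bar>f k\<bar>)"

definition pair_norm :: "ereal \<Rightarrow> real \<Rightarrow> real \<Rightarrow> real" where
  "pair_norm q s t = (if q = \<infinity> then max s t
     else (s powr real_of_ereal q + t powr real_of_ereal q) powr (1 / real_of_ereal q))"

definition lin_indep_family :: "('m::finite \<Rightarrow> nat \<Rightarrow> real) \<Rightarrow> bool" where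
  "lin_indep_family a \<longleftrightarrow>
     (\<forall>c::'m \<Rightarrow> real. (\<forall>k. (\<Sum>j\<in>UNIV. c j * a j k) = 0) \<longrightarrow> (\<forall>j. c j = 0))"

definition opA :: "('m::finite \<Rightarrow> nat \<Rightarrow> real) \<Rightarrow> (nat \<Rightarrow> real) \<Rightarrow> real^'m" where
  "opA a x = (\<chi> j. (\<Sum>k. a j k * x k))"

end

theory Submission
  imports Defs
begin


lemma nz: "is_norm N \<Longrightarrow> N 0 = 0" by (simp add: is_norm_def)
lemma nneg: "is_norm N \<Longrightarrow> N (- x) = N x"
  unfolding is_norm_def by (metis abs_minus_cancel abs_one mult_1 scaleR_minus1_left)
lemma nge: "is_norm N \<Longrightarrow> 0 \<le> N x" by (simp add: is_norm_def)
lemma ntri: "is_norm N \<Longrightarrow> N (x + y) \<le> N x + N y" by (simp add: is_norm_def)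
lemma nscale: "is_norm N \<Longrightarrow> N (c *\<^sub>R x) = \<bar>c\<bar> * N x" by (simp add: is_norm_def)
lemma nzero_iff: "is_norm N \<Longrightarrow> N x = 0 \<longleftrightarrow> x = 0" by (simp add: is_norm_def)

lemma nsum: assumes "is_norm N" "finite S" shows "N (sum f S) \<le> (\<Sum>i\<in>S. N (f i))"
  using assms(2) proof (induction S rule: finite_induct)
  case empty then show ?case using nz[OF assms(1)] by simp
next
  case (insert x F)
  then show ?case using ntri[OF assms(1), of "f x" "sum f F"] by simp
qed

lemma nupper: assumes "is_norm N" shows "\<exists>C\<ge>0. \<forall>x. N x \<le> C * norm x"
proof (intro exI[of _ "\<Sum>i\<in>UNIV. N (axis i (1::real))"] conjI allI)
  show "0 \<le> (\<Sum>i\<in>UNIV. N (axis i (1::real)))" by (simp add: nge[OF assms] sum_nonneg)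
  fix x :: "real^'a"
  have "N x = N (\<Sum>i\<in>UNIV. x$i *\<^sub>R axis i 1)"
    using basis_expansion[of x] by (simp add: scalar_mult_eq_scaleR)
  also have "\<dots> \<le> (\<Sum>i\<in>UNIV. N (x$i *\<^sub>R axis i 1))" by (rule nsum[OF assms]) simp
  also have "\<dots> = (\<Sum>i\<in>UNIV. \<bar>x$i\<bar> * N (axis i 1))" by (simp add: nscale[OF assms])
  also have "\<dots> \<le> (\<Sum>i\<in>UNIV. norm x * N (axis i 1))"
    by (intro sum_mono mult_right_mono component_le_norm_cart nge[OF assms])
  finally show "N x \<le> (\<Sum>i\<in>UNIV. N (axis i (1::real))) * norm x"
    by (simp add: sum_distrib_left mult.commute)
qed

lemma nlip: assumes "is_norm N" "\<forall>x. N x \<le> C * norm x"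
  shows "\<bar>N x - N y\<bar> \<le> C * norm (x - y)"
proof -
  have "N x \<le> N y + N (x - y)" using ntri[OF assms(1), of y "x - y"] by simp
  moreover have "N y \<le> N x + N (y - x)" using ntri[OF assms(1), of x "y - x"] by simp
  moreover have "N (y - x) = N (x - y)" using nneg[OF assms(1), of "x - y"] by simp
  ultimately show ?thesis using assms(2)[rule_format, of "x - y"] by linarith
qed

lemma nlower: assumes "is_norm (N :: real^'m \<Rightarrow> real)" shows "\<exists>c>0. \<forall>x. c * norm x \<le> N x"
proof -
  obtain C where C: "C \<ge> 0" "\<forall>x. N x \<le> C * norm x" using nupper[OF assms] by blast
  have cont: "continuous_on (sphere 0 1) N"
  proof (rule lipschitz_on_continuous_on)
    show "C-lipschitz_on (sphere 0 1) N"
      by (rule lipschitz_onI) (use nlip[OF assms C(2)] C(1) in \<open>auto simp: dist_norm\<close>)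
  qed
  have ne: "sphere (0::real^'m) 1 \<noteq> {}"
    by (metis norm_axis_1 mem_sphere_0 empty_iff)
  obtain x0 where x0: "x0 \<in> sphere 0 1" "\<forall>y\<in>sphere 0 1. N x0 \<le> N y"
    using continuous_attains_inf[OF compact_sphere ne cont] by blast
  have pos: "N x0 > 0" using x0(1) nzero_iff[OF assms, of x0] nge[OF assms, of x0] by auto
  show ?thesis
  proof (intro exI[of _ "N x0"] conjI allI pos)
    fix x :: "real^'m"
    show "N x0 * norm x \<le> N x"
    proof (cases "x = 0")
      case True then show ?thesis by (simp add: nz[OF assms])
    next
      case False
      have "N x0 \<le> N ((1 / norm x) *\<^sub>R x)" using x0(2) False by auto
      also have "\<dots> = N x / norm x" using nscale[OF assms] by simp
      finally show ?thesis using False by (simp add: field_simps)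
    qed
  qed
qed

lemma dual_bdd: assumes "is_norm (N :: real^'m \<Rightarrow> real)"
  shows "bdd_above {(\<Sum>j\<in>UNIV. l$j * y$j) | y. N y \<le> 1}"
proof -
  obtain c where c: "c > 0" "\<forall>x. c * norm x \<le> N x" using nlower[OF assms] by blast
  show ?thesis
  proof (rule bdd_aboveI[of _ "norm l / c"], clarify)
    fix y :: "real^'m" assume "N y \<le> 1"
    then have ny: "norm y \<le> 1 / c" using c by (smt (verit) le_divide_eq mult.commute)
    have "(\<Sum>j\<in>UNIV. l$j * y$j) = l \<bullet> y" by (simp add: inner_vec_def)
    also have "\<dots> \<le> norm l * norm y" by (rule norm_cauchy_schwarz)
    also have "\<dots> \<le> norm l * (1 / c)" by (intro mult_left_mono ny) simp
    finally show "(\<Sum>j\<in>UNIV. l$j * y$j) \<le> norm l / c" by simp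
  qed
qed

lemma dual_nonneg: assumes "is_norm (N :: real^'m \<Rightarrow> real)" shows "0 \<le> dual_norm N l"
  unfolding dual_norm_def
proof (rule cSup_upper2[where x=0])
  show "0 \<in> {(\<Sum>j\<in>UNIV. l$j * y$j) | y. N y \<le> 1}"
    by (auto intro!: exI[of _ 0] simp: nz[OF assms])
qed (auto simp: dual_bdd[OF assms])

lemma dual_ineq: assumes "is_norm (N :: real^'m \<Rightarrow> real)"
  shows "(\<Sum>j\<in>UNIV. l$j * w$j) \<le> dual_norm N l * N w"
proof (cases "w = 0")
  case True then show ?thesis by (simp add: nz[OF assms])
next
  case False
  then have pos: "N w > 0" using nzero_iff[OF assms] nge[OF assms] by (metis less_eq_real_def)
  let ?v = "(1 / N w) *\<^sub>R w"
  have "N ?v = 1" using pos nscale[OF assms] by simp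
  then have "(\<Sum>j\<in>UNIV. l$j * ?v$j) \<le> dual_norm N l"
    unfolding dual_norm_def by (intro cSup_upper dual_bdd[OF assms]) (use \<open>N ?v = 1\<close> in \<open>auto intro!: exI[of _ ?v]\<close>)
  moreover have "(\<Sum>j\<in>UNIV. l$j * ?v$j) = (\<Sum>j\<in>UNIV. l$j * w$j) / N w"
    by (simp add: sum_divide_distrib)
  ultimately show ?thesis using pos by (simp add: divide_le_eq)
qed


lemma inv_ereal: "1 \<le> (p::real) \<Longrightarrow> 1/ereal p = ereal (1/p)"
  by (metis divide_ereal_def ereal_divide one_ereal_def order.strict_trans2 zero_less_one dual_order.irrefl)

lemma pq_cases: assumes "1 \<le> p" "p' > 1" "1/ereal p + 1/p' = 1"
  shows "(p = 1 \<and> p' = \<infinity>) \<or> (p > 1 \<and> (\<exists>q. p' = ereal q \<and> q > 1 \<and> 1/p + 1/q = 1))"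
proof (cases p')
  case (real r)
  then have r: "r > 1" using assms(2) by simp
  have "1/ereal p = ereal (1/p)" using assms(1) by (rule inv_ereal)
  moreover have "1/p' = ereal (1/r)" using real r inv_ereal[of r] by simp
  ultimately have e: "1/p + 1/r = 1" using assms(3) by simp
  then have "p \<noteq> 1" using r by auto
  then show ?thesis using e r real assms(1) by auto
next
  case PInf
  have "1/ereal p = ereal (1/p)" using assms(1) by (rule inv_ereal)
  then have "1/p = 1" using assms(3) PInf by simp
  then show ?thesis using PInf by (auto simp: field_simps)
next
  case MInf then show ?thesis using assms(2) by simp
qed

lemma holder2:
  fixes p q s t a b :: real
  assumes pq: "p > 1" "q > 1" "1/p + 1/q = 1"
    and nn: "0 \<le> s" "0 \<le> t" "0 \<le> a" "0 \<le> b"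
    and st: "(s powr q + t powr q) powr (1/q) \<le> 1"
  shows "s*a + t*b \<le> (a powr p + b powr p) powr (1/p)"
proof -
  let ?S = "s powr q + t powr q"
  have S1: "?S \<le> 1"
  proof (rule ccontr)
    assume "\<not> ?S \<le> 1"
    then have "1 < ?S" by simp
    then have "1 powr (1/q) < ?S powr (1/q)" by (intro powr_less_mono2) (use pq in auto)
    then show False using st by simp
  qed
  let ?A = "(a powr p + b powr p) powr (1/p)"
  show ?thesis
  proof (cases "a powr p + b powr p = 0")
    case True
    then have "a = 0" "b = 0" using nn by (smt (verit) powr_ge_zero powr_eq_0_iff)+
    then show ?thesis by simp
  next
    case False
    have Ap: "a powr p + b powr p > 0" using False nn by (smt (verit) powr_ge_zero)
    have A0: "?A > 0" using Ap by simp
    have Apow: "?A powr p = a powr p + b powr p" using Ap pq by (simp add: powr_powr)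
    have y1: "s * (a / ?A) \<le> s powr q / q + (a / ?A) powr p / p"
      using Youngs_inequality[of q p s "a / ?A"] pq nn A0 by (simp add: add.commute)
    have y2: "t * (b / ?A) \<le> t powr q / q + (b / ?A) powr p / p"
      using Youngs_inequality[of q p t "b / ?A"] pq nn A0 by (simp add: add.commute)
    have "(a / ?A) powr p + (b / ?A) powr p = (a powr p + b powr p) / ?A powr p"
      using nn A0 by (simp add: powr_divide add_divide_distrib)
    also have "\<dots> = 1" using Apow Ap by simp
    finally have one: "(a / ?A) powr p + (b / ?A) powr p = 1" .
    have "s * (a / ?A) + t * (b / ?A) \<le> ?S / q + ((a / ?A) powr p + (b / ?A) powr p) / p"
      using y1 y2 by (simp add: add_divide_distrib)
    also have "\<dots> \<le> 1 / q + 1 / p" using S1 one pq by (simp add: divide_right_mono)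
    finally have "(s * a + t * b) / ?A \<le> 1" using pq by (simp add: add_divide_distrib)
    then show ?thesis using A0 by (simp add: divide_le_eq)
  qed
qed

lemma revholder2:
  fixes p q s t :: real
  assumes pq: "p > 1" "q > 1" "1/p + 1/q = 1"
    and nn: "0 \<le> s" "0 \<le> t"
    and H: "\<And>\<alpha> \<beta>. 0 \<le> \<alpha> \<Longrightarrow> 0 \<le> \<beta> \<Longrightarrow> s*\<alpha> + t*\<beta> \<le> (\<alpha> powr p + \<beta> powr p) powr (1/p)"
  shows "(s powr q + t powr q) powr (1/q) \<le> 1"
proof -
  have qp: "(q - 1) * p = q" using pq by (simp add: field_simps)
  let ?S = "s powr q + t powr q"
  have e1: "s * s powr (q - 1) = s powr q"
    using nn pq by (cases "s = 0") (auto simp: powr_diff)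
  have e2: "t * t powr (q - 1) = t powr q"
    using nn pq by (cases "t = 0") (auto simp: powr_diff)
  have "?S \<le> ((s powr (q-1)) powr p + (t powr (q-1)) powr p) powr (1/p)"
    using H[of "s powr (q-1)" "t powr (q-1)"] e1 e2 by simp
  also have "\<dots> = ?S powr (1/p)" by (simp add: powr_powr qp)
  finally have le: "?S \<le> ?S powr (1/p)" .
  have S1: "?S \<le> 1"
  proof (rule ccontr)
    assume "\<not> ?S \<le> 1"
    then have g: "1 < ?S" by simp
    then have "?S powr (1/p) < ?S powr 1" by (intro powr_less_mono) (use pq in auto)
    then show False using le g by simp
  qed
  show ?thesis by (rule powr_le1) (use S1 pq in auto)
qed

lemma holder_pn:
  assumes "1 \<le> p" "p' > 1" "1/ereal p + 1/p' = 1"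
    and nn: "0 \<le> s" "0 \<le> t" "0 \<le> a" "0 \<le> b"
    and st: "pair_norm p' s t \<le> 1"
  shows "s*a + t*b \<le> (a powr p + b powr p) powr (1/p)"
  using pq_cases[OF assms(1-3)]
proof
  assume h: "p = 1 \<and> p' = \<infinity>"
  then have "s \<le> 1" "t \<le> 1" using st by (auto simp: pair_norm_def)
  then have "s*a + t*b \<le> a + b" using nn by (smt (verit) mult_left_le_one_le mult.commute)
  then show ?thesis using h nn by simp
next
  assume "1 < p \<and> (\<exists>q. p' = ereal q \<and> 1 < q \<and> 1 / p + 1 / q = 1)"
  then obtain q where q: "p > 1" "p' = ereal q" "q > 1" "1/p + 1/q = 1" by blast
  show ?thesis by (rule holder2[OF q(1,3,4) nn]) (use st q in \<open>simp add: pair_norm_def\<close>)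
qed

lemma revholder_pn:
  assumes "1 \<le> p" "p' > 1" "1/ereal p + 1/p' = 1"
    and nn: "0 \<le> s" "0 \<le> t"
    and H: "\<And>\<alpha> \<beta>. 0 \<le> \<alpha> \<Longrightarrow> 0 \<le> \<beta> \<Longrightarrow> s*\<alpha> + t*\<beta> \<le> (\<alpha> powr p + \<beta> powr p) powr (1/p)"
  shows "pair_norm p' s t \<le> 1"
  using pq_cases[OF assms(1-3)]
proof
  assume h: "p = 1 \<and> p' = \<infinity>"
  have "s \<le> 1" using H[of 1 0] h by simp
  moreover have "t \<le> 1" using H[of 0 1] h by simp
  ultimately show ?thesis using h by (simp add: pair_norm_def)
next
  assume "1 < p \<and> (\<exists>q. p' = ereal q \<and> 1 < q \<and> 1 / p + 1 / q = 1)"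
  then obtain q where q: "p > 1" "p' = ereal q" "q > 1" "1/p + 1/q = 1" by blast
  show ?thesis using revholder2[OF q(1,3,4) nn H] q by (simp add: pair_norm_def)
qed



definition Bm :: "('m::finite \<Rightarrow> nat \<Rightarrow> real) \<Rightarrow> (nat \<Rightarrow> nat) \<Rightarrow> nat \<Rightarrow> (nat \<Rightarrow> real) \<Rightarrow> real^'m"
  where "Bm a kk n z = (\<chi> i. \<Sum>j<n. a i (kk j) * z j)"

definition Phi :: "(real^'m \<Rightarrow> real) \<Rightarrow> real \<Rightarrow> real \<Rightarrow> nat \<Rightarrow> real^'m \<Rightarrow> (nat \<Rightarrow> real) \<Rightarrow> real"
  where "Phi N \<rho> p n w z = (N w powr p + \<rho> * (\<Sum>j<n. \<bar>z j\<bar>) powr p) powr (1/p)"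

lemma Bm_lin: "Bm a kk n (\<lambda>j. u * z1 j + v * z2 j) = u *\<^sub>R Bm a kk n z1 + v *\<^sub>R Bm a kk n z2"
  by (simp add: Bm_def vec_eq_iff sum.distrib sum_distrib_left algebra_simps)

lemma Bm_scale: "Bm a kk n (\<lambda>j. c * z j) = c *\<^sub>R Bm a kk n z"
  by (simp add: Bm_def vec_eq_iff sum_distrib_left algebra_simps)

lemma Bm_zero: "Bm a kk n (\<lambda>j. 0) = 0"
  by (simp add: Bm_def vec_eq_iff)

lemma inner_Bm: "l \<bullet> Bm a kk n z = (\<Sum>j<n. (\<Sum>i\<in>UNIV. l$i * a i (kk j)) * z j)"
  by (simp add: Bm_def inner_vec_def sum_distrib_left sum_distrib_right algebra_simps sum.swap[of _ UNIV])

lemma cvx_powr: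
  fixes x y u v p :: real
  assumes "0 \<le> x" "0 \<le> y" "0 \<le> u" "0 \<le> v" "u + v = 1" "1 \<le> p"
  shows "(u * x + v * y) powr p \<le> u * x powr p + v * y powr p"
proof -
  have pw: "c powr p \<le> c" if "0 \<le> c" "c \<le> 1" for c
    using that powr_le_one_le[of c p] assms(6) by (cases "c = 0") auto
  show ?thesis
  proof (cases "x = 0")
    case True
    have "(v * y) powr p = v powr p * y powr p" using assms by (simp add: powr_mult)
    also have "\<dots> \<le> v * y powr p" using pw[of v] assms by (intro mult_right_mono) auto
    finally show ?thesis using True assms by simp
  next
    case x: False
    show ?thesis
    proof (cases "y = 0")
      case True
      have "(u * x) powr p = u powr p * x powr p" using assms by (simp add: powr_mult)
      also have "\<dots> \<le> u * x powr p" using pw[of u] assms by (intro mult_right_mono) auto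
      finally show ?thesis using True assms by simp
    next
      case False
      then show ?thesis
        using convex_onD[OF powr_convex[OF assms(6)], of v x y] x assms
        by (simp add: eq_diff_eq[symmetric])
    qed
  qed
qed

lemma sep:
  fixes N :: "real^'m \<Rightarrow> real" and a :: "'m \<Rightarrow> nat \<Rightarrow> real"
  assumes norm: "is_norm N" and rho: "\<rho> > 0" and p: "1 \<le> p" and V: "V > 0"
    and opt: "\<forall>z. V \<le> Phi N \<rho> p n (y0 - Bm a kk n z) z"
  shows "\<exists>l. l \<bullet> y0 = V \<and> (\<forall>w z. l \<bullet> w + l \<bullet> Bm a kk n z \<le> Phi N \<rho> p n w z)"
proof -
  define In where "In w z = N w powr p + \<rho> * (\<Sum>j<n. \<bar>z j\<bar>) powr p" for w z
  have In_nn: "0 \<le> In w z" for w z unfolding In_def using rho by simp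
  have Phi_In: "Phi N \<rho> p n w z = In w z powr (1/p)" for w z by (simp add: Phi_def In_def)
  define S where "S = {y0 - (w + Bm a kk n z) | w z. In w z < V powr p}"
  have "convex S"
    unfolding convex_def
  proof (intro ballI allI impI)
    fix x y and u v :: real assume x: "x \<in> S" and y: "y \<in> S" and uv: "0 \<le> u" "0 \<le> v" "u + v = 1"
    obtain w1 z1 where 1: "x = y0 - (w1 + Bm a kk n z1)" "In w1 z1 < V powr p" using x S_def by auto
    obtain w2 z2 where 2: "y = y0 - (w2 + Bm a kk n z2)" "In w2 z2 < V powr p" using y S_def by auto
    define w where "w = u *\<^sub>R w1 + v *\<^sub>R w2"
    define z where "z = (\<lambda>j. u * z1 j + v * z2 j)"
    have eq: "u *\<^sub>R x + v *\<^sub>R y = y0 - (w + Bm a kk n z)"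
      unfolding 1 2 w_def z_def Bm_lin
      by (simp add: algebra_simps flip: scaleR_add_left) (simp add: uv(3) flip: scaleR_add_left)
    have Nw: "N w \<le> u * N w1 + v * N w2"
      unfolding w_def using ntri[OF norm, of "u *\<^sub>R w1" "v *\<^sub>R w2"] nscale[OF norm] uv by simp
    have Sz: "(\<Sum>j<n. \<bar>z j\<bar>) \<le> u * (\<Sum>j<n. \<bar>z1 j\<bar>) + v * (\<Sum>j<n. \<bar>z2 j\<bar>)"
      unfolding z_def sum_distrib_left sum.distrib[symmetric]
      by (rule sum_mono) (use uv in \<open>auto simp: abs_mult intro: order.trans[OF abs_triangle_ineq]\<close>)
    have "N w powr p \<le> (u * N w1 + v * N w2) powr p"
      using Nw p by (intro powr_mono2) (auto simp: nge[OF norm])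
    also have "\<dots> \<le> u * N w1 powr p + v * N w2 powr p"
      using cvx_powr uv p nge[OF norm] by auto
    finally have A: "N w powr p \<le> u * N w1 powr p + v * N w2 powr p" .
    have "(\<Sum>j<n. \<bar>z j\<bar>) powr p \<le> (u * (\<Sum>j<n. \<bar>z1 j\<bar>) + v * (\<Sum>j<n. \<bar>z2 j\<bar>)) powr p"
      using Sz p by (intro powr_mono2) auto
    also have "\<dots> \<le> u * (\<Sum>j<n. \<bar>z1 j\<bar>) powr p + v * (\<Sum>j<n. \<bar>z2 j\<bar>) powr p"
      using cvx_powr uv p by (simp add: sum_nonneg)
    finally have B: "(\<Sum>j<n. \<bar>z j\<bar>) powr p \<le> u * (\<Sum>j<n. \<bar>z1 j\<bar>) powr p + v * (\<Sum>j<n. \<bar>z2 j\<bar>) powr p" .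
    have "In w z \<le> u * In w1 z1 + v * In w2 z2"
      unfolding In_def using A mult_left_mono[OF B, of \<rho>] rho by (simp add: algebra_simps)
    also have "\<dots> < V powr p"
    proof -
      have "u * In w1 z1 \<le> u * V powr p" "v * In w2 z2 \<le> v * V powr p"
        using 1 2 uv by (auto intro: mult_left_mono)
      moreover have "u > 0 \<or> v > 0" using uv by auto
      ultimately have "u * In w1 z1 + v * In w2 z2 < u * V powr p + v * V powr p"
        using 1 2 by (smt (verit) mult_strict_left_mono)
      then show ?thesis using uv(3) by (simp add: algebra_simps flip: distrib_right)
    qed
    finally show "u *\<^sub>R x + v *\<^sub>R y \<in> S" unfolding S_def eq by blast
  qed
  moreover have "0 \<notin> S"
  proof
    assume "0 \<in> S"
    then obtain w z where wz: "0 = y0 - (w + Bm a kk n z)" "In w z < V powr p" unfolding S_def by auto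
    then have w: "w = y0 - Bm a kk n z" by (simp add: algebra_simps)
    have "In w z powr (1/p) < (V powr p) powr (1/p)"
      using wz(2) In_nn p by (intro powr_less_mono2) auto
    also have "\<dots> = V" using V p by (simp add: powr_powr)
    finally show False using opt[rule_format, of z] w Phi_In by simp
  qed
  ultimately obtain c where c: "c \<noteq> 0" "\<forall>x\<in>S. 0 \<le> c \<bullet> x"
    using separating_hyperplane_set_0 by blast
  have sepc: "c \<bullet> (w + Bm a kk n z) \<le> c \<bullet> y0" if "In w z < V powr p" for w z
    using c(2) that unfolding S_def by (force simp: inner_diff_right)
  have Nc: "N c > 0" using c(1) nzero_iff[OF norm] nge[OF norm] by (metis less_eq_real_def)
  have cy: "c \<bullet> y0 > 0"
  proof -
    define r where "r = V / (2 * N c)"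
    have r: "r > 0" using V Nc by (simp add: r_def)
    have "In (r *\<^sub>R c) (\<lambda>j. 0) = (V / 2) powr p"
      unfolding In_def using nscale[OF norm] r Nc p V by (simp add: r_def)
    also have "\<dots> < V powr p" using V p by (intro powr_less_mono2) auto
    finally have "c \<bullet> (r *\<^sub>R c + Bm a kk n (\<lambda>j. 0)) \<le> c \<bullet> y0" by (rule sepc)
    moreover have "c \<bullet> (r *\<^sub>R c) > 0" using r c(1) by simp
    ultimately show ?thesis by (simp add: Bm_zero)
  qed
  define l where "l = (V / (c \<bullet> y0)) *\<^sub>R c"
  have ly: "l \<bullet> y0 = V" using cy by (simp add: l_def)
  have "l \<bullet> w + l \<bullet> Bm a kk n z \<le> Phi N \<rho> p n w z" for w z
  proof (rule dense_ge)
    fix \<phi>' assume ph: "Phi N \<rho> p n w z < \<phi>'"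
    have ph0: "Phi N \<rho> p n w z \<ge> 0" by (simp add: Phi_In)
    then have php: "\<phi>' > 0" using ph by simp
    define k where "k = V / \<phi>'"
    have k: "k > 0" using V php by (simp add: k_def)
    have "In (k *\<^sub>R w) (\<lambda>j. k * z j) = k powr p * In w z"
      unfolding In_def using k nscale[OF norm] nge[OF norm] rho
      by (simp add: abs_mult sum_distrib_left[symmetric] powr_mult algebra_simps)
    also have "\<dots> = (k * Phi N \<rho> p n w z) powr p"
      using k ph0 In_nn p by (simp add: powr_mult Phi_In powr_powr)
    also have "\<dots> < (k * \<phi>') powr p"
      using k ph0 ph p by (intro powr_less_mono2) auto
    also have "\<dots> = V powr p" using php by (simp add: k_def)
    finally have "c \<bullet> (k *\<^sub>R w + Bm a kk n (\<lambda>j. k * z j)) \<le> c \<bullet> y0" by (rule sepc)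
    then have "k * (c \<bullet> w + c \<bullet> Bm a kk n z) \<le> c \<bullet> y0"
      by (simp add: Bm_scale inner_add_right algebra_simps)
    then have "(c \<bullet> w + c \<bullet> Bm a kk n z) \<le> (c \<bullet> y0) / k" using k by (simp add: field_simps)
    then have "(V / (c \<bullet> y0)) * (c \<bullet> w + c \<bullet> Bm a kk n z) \<le> (V / (c \<bullet> y0)) * ((c \<bullet> y0) / k)"
      using V cy by (intro mult_left_mono) auto
    also have "\<dots> = \<phi>'" using V cy php by (simp add: k_def)
    finally show "l \<bullet> w + l \<bullet> Bm a kk n z \<le> \<phi>'" by (simp add: l_def algebra_simps)
  qed
  then show ?thesis using ly by blast
qed



lemma lim_bound: fixes f :: "nat \<Rightarrow> real" assumes "f \<longlonglongrightarrow> 0" shows "\<exists>K>0. \<forall>k. \<bar>f k\<bar> \<le> K"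
  using convergent_imp_Bseq[OF convergentI[OF assms]] unfolding Bseq_def by auto

lemma sup_bdd: fixes f :: "nat \<Rightarrow> real" assumes "f \<longlonglongrightarrow> 0" shows "bdd_above (range (\<lambda>k. \<bar>f k\<bar>))"
  using lim_bound[OF assms] by (auto intro: bdd_aboveI2)

lemma sup_ge: fixes f :: "nat \<Rightarrow> real" assumes "f \<longlonglongrightarrow> 0" shows "\<bar>f k\<bar> \<le> sup_norm f"
  unfolding sup_norm_def by (rule cSUP_upper[OF _ sup_bdd[OF assms]]) simp

lemma sup_nonneg: fixes f :: "nat \<Rightarrow> real" assumes "f \<longlonglongrightarrow> 0" shows "0 \<le> sup_norm f"
  using sup_ge[OF assms, of 0] by simp

lemma mu_lim: assumes "\<forall>j. a j \<longlonglongrightarrow> 0"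
  shows "(\<lambda>k. c * (\<Sum>j\<in>UNIV. l$j * a j k)) \<longlonglongrightarrow> (0::real)"
proof -
  have "(\<lambda>k. (\<Sum>j\<in>UNIV. l$j * a j k)) \<longlonglongrightarrow> 0"
    by (intro tendsto_null_sum tendsto_mult_right_zero) (use assms in auto)
  then show ?thesis by (rule tendsto_mult_right_zero)
qed

lemma fin_supp:
  fixes kk :: "nat \<Rightarrow> nat" and n :: nat and G :: "nat \<Rightarrow> real \<Rightarrow> real"
  assumes inj: "inj_on kk {..<n}" and on: "\<forall>j<n. x (kk j) = z j"
    and off: "\<forall>k. k \<notin> kk ` {..<n} \<longrightarrow> x k = 0" and G: "\<forall>k. G k 0 = 0"
  shows "summable (\<lambda>k. G k (x k))" "suminf (\<lambda>k. G k (x k)) = (\<Sum>j<n. G (kk j) (z j))"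
proof -
  have z: "\<And>k. k \<notin> kk ` {..<n} \<Longrightarrow> G k (x k) = 0" using off G by simp
  have fin: "finite (kk ` {..<n})" by simp
  show "summable (\<lambda>k. G k (x k))" by (rule summable_finite[OF fin z])
  have "suminf (\<lambda>k. G k (x k)) = (\<Sum>k\<in>kk ` {..<n}. G k (x k))" by (rule suminf_finite[OF fin z])
  also have "\<dots> = (\<Sum>j<n. G (kk j) (x (kk j)))" by (simp add: sum.reindex[OF inj])
  also have "\<dots> = (\<Sum>j<n. G (kk j) (z j))" using on by simp
  finally show "suminf (\<lambda>k. G k (x k)) = (\<Sum>j<n. G (kk j) (z j))" .
qed

lemma a_bound: fixes a :: "'m::finite \<Rightarrow> nat \<Rightarrow> real" assumes "\<forall>j. a j \<longlonglongrightarrow> 0" shows "\<exists>K>0. \<forall>j k. \<bar>a j k\<bar> \<le> K"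
proof -
  have "(\<lambda>k. \<Sum>j\<in>UNIV. \<bar>a j k\<bar>) \<longlonglongrightarrow> 0"
    by (intro tendsto_null_sum tendsto_rabs_zero) (use assms in auto)
  then obtain K where K: "K > 0" "\<forall>k. \<bar>\<Sum>j\<in>UNIV. \<bar>a j k\<bar>\<bar> \<le> K" using lim_bound by blast
  have "\<bar>a j k\<bar> \<le> K" for j k
    using member_le_sum[of j UNIV "\<lambda>j. \<bar>a j k\<bar>"] K(2)[rule_format, of k] by simp
  then show ?thesis using K(1) by blast
qed

lemma summ_ax: fixes a :: "'m::finite \<Rightarrow> nat \<Rightarrow> real"
  assumes "\<forall>j. a j \<longlonglongrightarrow> 0" "summable (\<lambda>k. \<bar>x k\<bar>)" shows "summable (\<lambda>k. a j k * x k)"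
proof -
  obtain K where K: "K > 0" "\<forall>j k. \<bar>a j k\<bar> \<le> K" using a_bound[OF assms(1)] by blast
  show ?thesis
  proof (rule summable_comparison_test'[of "\<lambda>k. K * \<bar>x k\<bar>" 0])
    show "summable (\<lambda>k. K * \<bar>x k\<bar>)" using assms(2) by (rule summable_mult)
    show "norm (a j k * x k) \<le> K * \<bar>x k\<bar>" for k
      using K by (simp add: abs_mult mult_right_mono)
  qed
qed

lemma inner_opA: fixes a :: "'m::finite \<Rightarrow> nat \<Rightarrow> real"
  assumes "\<forall>j. a j \<longlonglongrightarrow> 0" "summable (\<lambda>k. \<bar>x k\<bar>)"
  shows "summable (\<lambda>k. (\<Sum>j\<in>UNIV. l$j * a j k) * x k)"
    "l \<bullet> opA a x = (\<Sum>k. (\<Sum>j\<in>UNIV. l$j * a j k) * x k)"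
proof -
  have s: "summable (\<lambda>k. l$j * a j k * x k)" for j
    using summable_mult[OF summ_ax[OF assms, of j], of "l$j"] by (simp add: mult.assoc)
  show "summable (\<lambda>k. (\<Sum>j\<in>UNIV. l$j * a j k) * x k)"
    using summable_sum[of UNIV "\<lambda>j k. l$j * a j k * x k"] s by (simp add: sum_distrib_right)
  have "l \<bullet> opA a x = (\<Sum>j\<in>UNIV. l$j * (\<Sum>k. a j k * x k))" by (simp add: inner_vec_def opA_def)
  also have "\<dots> = (\<Sum>j\<in>UNIV. (\<Sum>k. l$j * a j k * x k))"
    using suminf_mult[OF summ_ax[OF assms]] by (simp add: mult.assoc)
  also have "\<dots> = (\<Sum>k. \<Sum>j\<in>UNIV. l$j * a j k * x k)" using suminf_sum[of UNIV "\<lambda>j k. l$j * a j k * x k"] s by simp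
  finally show "l \<bullet> opA a x = (\<Sum>k. (\<Sum>j\<in>UNIV. l$j * a j k) * x k)" by (simp add: sum_distrib_right)
qed

lemma wd:
  fixes N :: "real^'m \<Rightarrow> real" and a :: "'m \<Rightarrow> nat \<Rightarrow> real"
  assumes norm: "is_norm N" and c0: "\<forall>j. a j \<longlonglongrightarrow> 0" and rho: "\<rho> > 0" and p: "1 \<le> p"
    and p': "p' > 1" "1 / ereal p + 1 / p' = 1"
    and feas: "pair_norm p' (dual_norm N lam)
          (sup_norm (\<lambda>k. \<rho> powr (-1/p) * (\<Sum>j\<in>UNIV. lam$j * a j k))) \<le> 1"
    and x: "summable (\<lambda>k. \<bar>x k\<bar>)"
  shows "lam \<bullet> w + (\<Sum>k. (\<Sum>j\<in>UNIV. lam$j * a j k) * x k)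
     \<le> (N w powr p + \<rho> * (\<Sum>k. \<bar>x k\<bar>) powr p) powr (1/p)"
proof -
  define mu where "mu k = (\<Sum>j\<in>UNIV. lam$j * a j k)" for k
  define T where "T = sup_norm (\<lambda>k. \<rho> powr (-1/p) * mu k)"
  define s where "s = dual_norm N lam"
  define X where "X = (\<Sum>k. \<bar>x k\<bar>)"
  have lim: "(\<lambda>k. \<rho> powr (-1/p) * mu k) \<longlonglongrightarrow> 0" unfolding mu_def by (rule mu_lim[OF c0])
  have T0: "0 \<le> T" unfolding T_def by (rule sup_nonneg[OF lim])
  have s0: "0 \<le> s" unfolding s_def by (rule dual_nonneg[OF norm])
  have X0: "0 \<le> X" unfolding X_def using x by (simp add: suminf_nonneg)
  have summ: "summable (\<lambda>k. mu k * x k)" unfolding mu_def by (rule inner_opA(1)[OF c0 x])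
  have "(\<Sum>k. mu k * x k) \<le> (\<Sum>k. (\<rho> powr (1/p) * T) * \<bar>x k\<bar>)"
  proof (rule suminf_le[OF _ summ summable_mult[OF x]])
    fix k
    have "\<bar>\<rho> powr (-1/p) * mu k\<bar> \<le> T" unfolding T_def by (rule sup_ge[OF lim])
    then have "\<bar>mu k\<bar> \<le> \<rho> powr (1/p) * T" using rho
      by (simp add: abs_mult powr_minus_divide divide_le_eq mult.commute)
    then have "\<bar>mu k\<bar> * \<bar>x k\<bar> \<le> \<rho> powr (1/p) * T * \<bar>x k\<bar>" by (rule mult_right_mono) simp
    moreover have "mu k * x k \<le> \<bar>mu k\<bar> * \<bar>x k\<bar>" by (metis abs_mult abs_ge_self)
    ultimately show "mu k * x k \<le> \<rho> powr (1/p) * T * \<bar>x k\<bar>" by linarith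
  qed
  also have "\<dots> = T * (\<rho> powr (1/p) * X)" using suminf_mult[OF x] by (simp add: X_def)
  finally have m: "(\<Sum>k. mu k * x k) \<le> T * (\<rho> powr (1/p) * X)" .
  have "lam \<bullet> w \<le> s * N w" using dual_ineq[OF norm, of lam w] by (simp add: s_def inner_vec_def)
  then have "lam \<bullet> w + (\<Sum>k. mu k * x k) \<le> s * N w + T * (\<rho> powr (1/p) * X)" using m by simp
  also have "\<dots> \<le> (N w powr p + (\<rho> powr (1/p) * X) powr p) powr (1/p)"
    by (rule holder_pn[OF p p' s0 T0]) (use feas X0 nge[OF norm] in \<open>auto simp: s_def T_def mu_def\<close>)
  also have "(\<rho> powr (1/p) * X) powr p = \<rho> * X powr p"
    using rho X0 p by (simp add: powr_mult powr_powr)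
  finally show ?thesis by (simp add: mu_def X_def)
qed



lemma gap:
  fixes f d :: "nat \<Rightarrow> real" and kk :: "nat \<Rightarrow> nat" and n :: nat
  assumes f: "f \<longlonglongrightarrow> 0" and d: "d \<longlonglongrightarrow> 0" and S: "{k. \<bar>f k\<bar> = sup_norm f} = kk ` {..<n}"
  shows "\<exists>t>0. t \<le> 1 \<and> (\<exists>j0<n. \<forall>k. \<bar>f k + t * d k\<bar> \<le> \<bar>f (kk j0) + t * d (kk j0)\<bar>)"
proof -
  define M where "M = sup_norm f"
  have le: "\<bar>f k\<bar> \<le> M" for k using sup_ge[OF f] M_def by simp
  have M0: "M > 0"
  proof (rule ccontr)
    assume "\<not> M > 0"
    then have "\<forall>k. \<bar>f k\<bar> = M" using le by (smt (verit) abs_ge_zero)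
    then have "UNIV \<subseteq> kk ` {..<n}" using S M_def by auto
    then have "finite (UNIV :: nat set)" by (rule finite_subset) simp
    then show False by simp
  qed
  obtain K0 where K0: "\<forall>k\<ge>K0. \<bar>f k\<bar> < M/2" using LIMSEQ_D[OF f, of "M/2"] M0 by auto
  define F where "F = {k. k < K0 \<and> \<bar>f k\<bar> \<noteq> M}"
  define m2 where "m2 = Max (insert (M/2) ((\<lambda>k. \<bar>f k\<bar>) ` F))"
  have finF: "finite F" by (simp add: F_def)
  have m2lt: "m2 < M"
  proof -
    have "m2 \<in> insert (M/2) ((\<lambda>k. \<bar>f k\<bar>) ` F)" unfolding m2_def by (rule Max_in) (use finF in auto)
    then show ?thesis using M0 le unfolding F_def by (auto simp: less_le)
  qed
  have off: "\<bar>f k\<bar> \<le> m2" if "k \<notin> kk ` {..<n}" for k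
  proof (cases "k < K0")
    case True
    then have "k \<in> F" using that S unfolding M_def F_def by auto
    then show ?thesis unfolding m2_def by (intro Max_ge) (use finF in auto)
  next
    case False
    then have "\<bar>f k\<bar> < M/2" using K0 by auto
    moreover have "M/2 \<le> m2" unfolding m2_def by (intro Max_ge) (use finF in auto)
    ultimately show ?thesis by simp
  qed
  have n0: "n > 0"
  proof (rule ccontr)
    assume "\<not> n > 0" then have "n = 0" by simp
    then have "\<forall>k. \<bar>f k\<bar> \<le> m2" using off by simp
    then have "M \<le> m2" unfolding M_def sup_norm_def by (intro cSUP_least) auto
    then show False using m2lt by simp
  qed
  define \<delta> where "\<delta> = M - m2"
  have \<delta>: "\<delta> > 0" using m2lt \<delta>_def by simp
  obtain Db where Db: "Db > 0" "\<forall>k. \<bar>d k\<bar> \<le> Db" using lim_bound[OF d] by blast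
  define t where "t = min 1 (\<delta> / (4 * Db))"
  have t: "t > 0" "t \<le> 1" using \<delta> Db by (auto simp: t_def)
  have tD: "t * Db \<le> \<delta>/4"
  proof -
    have "t \<le> \<delta> / (4 * Db)" by (simp add: t_def)
    then show ?thesis using Db by (simp add: field_simps)
  qed
  have td: "\<bar>t * d k\<bar> \<le> \<delta>/4" for k
  proof -
    have "\<bar>t * d k\<bar> = t * \<bar>d k\<bar>" using t by (simp add: abs_mult)
    also have "\<dots> \<le> t * Db" using Db t by (intro mult_left_mono) auto
    finally show ?thesis using tD by simp
  qed
  define g where "g j = \<bar>f (kk j) + t * d (kk j)\<bar>" for j
  define mx where "mx = Max (g ` {..<n})"
  have "mx \<in> g ` {..<n}" unfolding mx_def by (rule Max_in) (use n0 in auto)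
  then obtain j0 where j0: "j0 < n" "g j0 = mx" by auto
  have j0max: "g j \<le> g j0" if "j < n" for j
    unfolding j0(2) mx_def by (rule Max_ge) (use that in auto)
  have "\<forall>k. \<bar>f k + t * d k\<bar> \<le> g j0"
  proof
    fix k show "\<bar>f k + t * d k\<bar> \<le> g j0"
    proof (cases "k \<in> kk ` {..<n}")
      case True then obtain j where "j < n" "k = kk j" by auto
      then show ?thesis using j0max g_def by auto
    next
      case False
      have a: "\<bar>f k + t * d k\<bar> \<le> m2 + \<delta>/4" using off[OF False] td[of k] by (smt (verit) abs_triangle_ineq)
      have "kk 0 \<in> kk ` {..<n}" using n0 by auto
      then have "\<bar>f (kk 0)\<bar> = M" using S M_def by auto
      then have "M - \<delta>/4 \<le> g 0" using td[of "kk 0"] unfolding g_def by (smt (verit) abs_triangle_ineq)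
      moreover have "g 0 \<le> g j0" using j0max n0 by simp
      ultimately show ?thesis using a \<delta> \<delta>_def by linarith
    qed
  qed
  then show ?thesis using t j0(1) unfolding g_def by blast
qed

lemma sum_single: fixes g :: "nat \<Rightarrow> real" assumes "j0 < n"
  shows "(\<Sum>j<n. g j * (if j = j0 then v else 0)) = g j0 * v"
proof -
  have "(\<Sum>j<n. g j * (if j = j0 then v else 0)) = (\<Sum>j<n. if j = j0 then g j * v else 0)"
    by (rule sum.cong) auto
  also have "\<dots> = g j0 * v" using assms by (simp add: sum.delta)
  finally show ?thesis .
qed

lemma sum_single_abs: fixes v :: real and j0 n :: nat assumes "j0 < n"
  shows "(\<Sum>j<n. \<bar>if j = j0 then v else 0\<bar>) = \<bar>v\<bar>"
proof -
  have "(\<Sum>j<n. \<bar>if j = j0 then v else 0\<bar>) = (\<Sum>j<n. if j = j0 then \<bar>v\<bar> else 0)"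
    by (rule sum.cong) auto
  also have "\<dots> = \<bar>v\<bar>" using assms sum.delta[of "{..<n}" j0 "\<lambda>_. \<bar>v\<bar>"] by simp
  finally show ?thesis .
qed

lemma sup_lin:
  fixes X :: "real set"
  assumes "X \<noteq> {}" "0 \<le> \<alpha>" "\<forall>x\<in>X. \<alpha> * x + c \<le> e"
  shows "\<alpha> * Sup X + c \<le> e"
proof (cases "\<alpha> = 0")
  case True then show ?thesis using assms by auto
next
  case False
  then have a: "\<alpha> > 0" using assms by simp
  have "Sup X \<le> (e - c) / \<alpha>"
    by (rule cSup_least[OF assms(1)]) (use assms(3) a in \<open>auto simp: field_simps\<close>)
  then show ?thesis using a by (simp add: field_simps)
qed


theorem proposition4p1:
  fixes N :: "real^'m \<Rightarrow> real"
    and a :: "'m \<Rightarrow> nat \<Rightarrow> real"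
    and y0 :: "real^'m"
    and \<rho> p :: real
    and p' :: ereal
    and lam :: "real^'m"
    and n :: nat
    and kk :: "nat \<Rightarrow> nat"
    and zhat xhat :: "nat \<Rightarrow> real"
  assumes norm: "is_norm N"
    and c0: "\<forall>j. a j \<longlonglongrightarrow> 0"
    and indep: "lin_indep_family a"
    and rho: "\<rho> > 0"
    and p: "1 \<le> p"
    and p': "p' > 1" "1 / ereal p + 1 / p' = 1"
    and lam_feas: "pair_norm p' (dual_norm N lam)
          (sup_norm (\<lambda>k. \<rho> powr (-1/p) * (\<Sum>j\<in>UNIV. lam$j * a j k))) \<le> 1"
    and lam_opt: "\<forall>l::real^'m. pair_norm p' (dual_norm N l)
          (sup_norm (\<lambda>k. \<rho> powr (-1/p) * (\<Sum>j\<in>UNIV. l$j * a j k))) \<le> 1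
          \<longrightarrow> (\<Sum>j\<in>UNIV. y0$j * l$j) \<le> (\<Sum>j\<in>UNIV. y0$j * lam$j)"
    and enum: "bij_betw kk {..<n}
          {k. \<bar>\<Sum>j\<in>UNIV. lam$j * a j k\<bar> = sup_norm (\<lambda>k. \<Sum>j\<in>UNIV. lam$j * a j k)}"
    and zhat_opt: "\<forall>z::nat \<Rightarrow> real.
          (N (y0 - (\<chi> i. \<Sum>j<n. a i (kk j) * zhat j)) powr p
             + \<rho> * (\<Sum>j<n. \<bar>zhat j\<bar>) powr p) powr (1/p)
          \<le> (N (y0 - (\<chi> i. \<Sum>j<n. a i (kk j) * z j)) powr p
             + \<rho> * (\<Sum>j<n. \<bar>z j\<bar>) powr p) powr (1/p)"
    and xhat_on: "\<forall>j<n. xhat (kk j) = zhat j"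
    and xhat_off: "\<forall>k. k \<notin> kk ` {..<n} \<longrightarrow> xhat k = 0"
  shows "summable (\<lambda>k. \<bar>xhat k\<bar>) \<and>
    (\<forall>x::nat \<Rightarrow> real. summable (\<lambda>k. \<bar>x k\<bar>) \<longrightarrow>
      (N (y0 - opA a xhat) powr p + \<rho> * (\<Sum>k. \<bar>xhat k\<bar>) powr p) powr (1/p)
      \<le> (N (y0 - opA a x) powr p + \<rho> * (\<Sum>k. \<bar>x k\<bar>) powr p) powr (1/p))"
proof -
  have inj: "inj_on kk {..<n}" using enum bij_betw_imp_inj_on by blast
  have img: "kk ` {..<n} = {k. \<bar>\<Sum>j\<in>UNIV. lam$j * a j k\<bar> = sup_norm (\<lambda>k. \<Sum>j\<in>UNIV. lam$j * a j k)}"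
    using enum bij_betw_imp_surj_on by blast
  define V where "V = Phi N \<rho> p n (y0 - Bm a kk n zhat) zhat"
  define D where "D = (\<Sum>j\<in>UNIV. y0$j * lam$j)"
  have Dinner: "D = lam \<bullet> y0" by (simp add: D_def inner_vec_def mult.commute)
  have xs: "summable (\<lambda>k. \<bar>xhat k\<bar>)" and xn: "(\<Sum>k. \<bar>xhat k\<bar>) = (\<Sum>j<n. \<bar>zhat j\<bar>)"
    using fin_supp[OF inj xhat_on xhat_off, of "\<lambda>k v. \<bar>v\<bar>"] by auto
  have xA: "opA a xhat = Bm a kk n zhat"
  proof -
    have "(\<Sum>k. a i k * xhat k) = (\<Sum>j<n. a i (kk j) * zhat j)" for i
      using fin_supp(2)[OF inj xhat_on xhat_off, of "\<lambda>k v. a i k * v"] by simp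
    then show ?thesis by (simp add: opA_def Bm_def vec_eq_iff)
  qed
  have valx: "(N (y0 - opA a xhat) powr p + \<rho> * (\<Sum>k. \<bar>xhat k\<bar>) powr p) powr (1/p) = V"
    by (simp add: xA xn V_def Phi_def)
  have wdx: "D \<le> (N (y0 - opA a x) powr p + \<rho> * (\<Sum>k. \<bar>x k\<bar>) powr p) powr (1/p)"
    if x: "summable (\<lambda>k. \<bar>x k\<bar>)" for x
  proof -
    have "lam \<bullet> (y0 - opA a x) + (\<Sum>k. (\<Sum>j\<in>UNIV. lam$j * a j k) * x k)
        \<le> (N (y0 - opA a x) powr p + \<rho> * (\<Sum>k. \<bar>x k\<bar>) powr p) powr (1/p)"
      by (rule wd[OF norm c0 rho p p' lam_feas x])
    moreover have "lam \<bullet> opA a x = (\<Sum>k. (\<Sum>j\<in>UNIV. lam$j * a j k) * x k)"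
      by (rule inner_opA(2)[OF c0 x])
    ultimately show ?thesis by (simp add: Dinner inner_diff_right)
  qed
  have VD: "V \<le> D"
  proof (cases "V > 0")
    case False
    have d0: "dual_norm N (0::real^'m) = 0"
    proof -
      have "{(\<Sum>j\<in>UNIV. (0::real^'m)$j * y$j) | y. N y \<le> 1} = {0}"
        using nz[OF norm] by (auto intro!: exI[of _ 0])
      then show ?thesis by (simp add: dual_norm_def)
    qed
    have s0: "sup_norm (\<lambda>k. \<rho> powr (-1/p) * (\<Sum>j\<in>UNIV. (0::real^'m)$j * a j k)) = 0"
      by (simp add: sup_norm_def)
    have "pair_norm p' 0 0 \<le> 1"
      by (rule revholder_pn[OF p p']) auto
    then have "(\<Sum>j\<in>UNIV. y0$j * (0::real^'m)$j) \<le> D"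
      using lam_opt[rule_format, of 0] d0 s0 by (simp add: D_def)
    then show ?thesis using False by simp
  next
    case True
    have opt: "\<forall>z. V \<le> Phi N \<rho> p n (y0 - Bm a kk n z) z"
      using zhat_opt by (simp add: V_def Phi_def Bm_def)
    obtain l' where l': "l' \<bullet> y0 = V" "\<forall>w z. l' \<bullet> w + l' \<bullet> Bm a kk n z \<le> Phi N \<rho> p n w z"
      using sep[OF norm rho p True opt] by blast
    have Qlam: "lam \<bullet> w + lam \<bullet> Bm a kk n z \<le> Phi N \<rho> p n w z" for w z
    proof -
      define x where "x k = (if k \<in> kk ` {..<n} then z (inv_into {..<n} kk k) else 0)" for k
      have on: "\<forall>j<n. x (kk j) = z j" using inj by (simp add: x_def)
      have off: "\<forall>k. k \<notin> kk ` {..<n} \<longrightarrow> x k = 0" by (simp add: x_def)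
      have xs: "summable (\<lambda>k. \<bar>x k\<bar>)" and xn: "(\<Sum>k. \<bar>x k\<bar>) = (\<Sum>j<n. \<bar>z j\<bar>)"
        using fin_supp[OF inj on off, of "\<lambda>k v. \<bar>v\<bar>"] by auto
      have xm: "(\<Sum>k. (\<Sum>j\<in>UNIV. lam$j * a j k) * x k) = lam \<bullet> Bm a kk n z"
        using fin_supp(2)[OF inj on off, of "\<lambda>k v. (\<Sum>j\<in>UNIV. lam$j * a j k) * v"]
        by (simp add: inner_Bm)
      show ?thesis using wd[OF norm c0 rho p p' lam_feas xs, of w] xm xn by (simp add: Phi_def)
    qed
    define d where "d k = (\<Sum>j\<in>UNIV. (l' - lam)$j * a j k)" for k
    have flim: "(\<lambda>k. \<Sum>j\<in>UNIV. lam$j * a j k) \<longlonglongrightarrow> 0"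
      using mu_lim[OF c0, of 1 lam] by simp
    have dlim: "d \<longlonglongrightarrow> 0"
      using mu_lim[OF c0, of 1 "l' - lam"] unfolding d_def[abs_def] by simp
    obtain t j0 where t: "t > 0" "t \<le> 1" "j0 < n"
      and tj: "\<forall>k. \<bar>(\<Sum>j\<in>UNIV. lam$j * a j k) + t * d k\<bar>
               \<le> \<bar>(\<Sum>j\<in>UNIV. lam$j * a j (kk j0)) + t * d (kk j0)\<bar>"
      using gap[OF flim dlim img[symmetric]] by blast
    define lt where "lt = lam + t *\<^sub>R (l' - lam)"
    have mu_lt: "(\<Sum>j\<in>UNIV. lt$j * a j k) = (\<Sum>j\<in>UNIV. lam$j * a j k) + t * d k" for k
      unfolding lt_def d_def sum_distrib_left sum.distrib[symmetric] by (rule sum.cong) (simp_all add: algebra_simps)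
    have Qlt: "lt \<bullet> w + lt \<bullet> Bm a kk n z \<le> Phi N \<rho> p n w z" for w z
    proof -
      have "lt \<bullet> w + lt \<bullet> Bm a kk n z
          = (1 - t) * (lam \<bullet> w + lam \<bullet> Bm a kk n z) + t * (l' \<bullet> w + l' \<bullet> Bm a kk n z)"
        by (simp add: lt_def inner_add_left inner_diff_left algebra_simps)
      also have "\<dots> \<le> (1 - t) * Phi N \<rho> p n w z + t * Phi N \<rho> p n w z"
        using Qlam[of w z] l'(2) t by (intro add_mono mult_left_mono) auto
      finally show ?thesis by (simp add: algebra_simps)
    qed
    define c where "c = \<rho> powr (-1/p)"
    have c0': "c > 0" using rho by (simp add: c_def)
    define mk where "mk = (\<Sum>j\<in>UNIV. lt$j * a j (kk j0))"
    define T where "T = c * \<bar>mk\<bar>"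
    have T0: "T \<ge> 0" using c0' by (simp add: T_def)
    have supT: "sup_norm (\<lambda>k. \<rho> powr (-1/p) * (\<Sum>j\<in>UNIV. lt$j * a j k)) = T"
      unfolding sup_norm_def
    proof (rule cSup_eq_maximum)
      show "T \<in> range (\<lambda>k. \<bar>\<rho> powr (-1/p) * (\<Sum>j\<in>UNIV. lt$j * a j k)\<bar>)"
        using c0' by (auto simp: T_def mk_def c_def abs_mult intro!: image_eqI[of _ _ "kk j0"])
      show "x \<le> T" if xr: "x \<in> range (\<lambda>k. \<bar>\<rho> powr (-1/p) * (\<Sum>j\<in>UNIV. lt$j * a j k)\<bar>)" for x
      proof -
        obtain k where k: "x = \<bar>\<rho> powr (-1/p) * (\<Sum>j\<in>UNIV. lt$j * a j k)\<bar>" using xr by blast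
        have "x = c * \<bar>(\<Sum>j\<in>UNIV. lam$j * a j k) + t * d k\<bar>"
          using c0' by (simp add: k mu_lt c_def abs_mult)
        also have "\<dots> \<le> c * \<bar>(\<Sum>j\<in>UNIV. lam$j * a j (kk j0)) + t * d (kk j0)\<bar>"
          using tj c0' by (intro mult_left_mono) auto
        also have "\<dots> = T" by (simp add: T_def mk_def mu_lt)
        finally show ?thesis .
      qed
    qed
    have H: "dual_norm N lt * \<alpha> + T * \<beta> \<le> (\<alpha> powr p + \<beta> powr p) powr (1/p)"
      if ab: "0 \<le> \<alpha>" "0 \<le> \<beta>" for \<alpha> \<beta>
    proof -
      define zz where "zz j = (if j = j0 then sgn mk * (\<beta> * c) else 0)" for j
      have bz: "lt \<bullet> Bm a kk n zz = T * \<beta>"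
      proof -
        have "lt \<bullet> Bm a kk n zz = mk * (sgn mk * (\<beta> * c))"
          unfolding inner_Bm zz_def mk_def by (rule sum_single[OF t(3)])
        also have "\<dots> = T * \<beta>" by (simp add: T_def abs_sgn algebra_simps flip: abs_mult_sgn)
        finally show ?thesis .
      qed
      have sz: "(\<Sum>j<n. \<bar>zz j\<bar>) \<le> \<beta> * c"
      proof -
        have "(\<Sum>j<n. \<bar>zz j\<bar>) = \<bar>sgn mk * (\<beta> * c)\<bar>"
          unfolding zz_def by (rule sum_single_abs[OF t(3)])
        also have "\<dots> \<le> \<beta> * c" using ab c0' by (simp add: abs_mult abs_sgn_eq mult_le_one)
        finally show ?thesis .
      qed
      have cp: "c powr p = inverse \<rho>"
      proof -
        have "c powr p = \<rho> powr (-1/p * p)" by (simp add: c_def powr_powr)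
        also have "-1/p * p = -1" using p by simp
        finally show ?thesis using rho by (simp add: powr_minus)
      qed
      have rc: "\<rho> * (\<beta> * c) powr p = \<beta> powr p"
        using ab c0' rho by (simp add: powr_mult cp)
      have W: "\<alpha> * x + T * \<beta> \<le> (\<alpha> powr p + \<beta> powr p) powr (1/p)"
        if xin: "x \<in> {(\<Sum>j\<in>UNIV. lt$j * y$j) | y. N y \<le> 1}" for x
      proof -
        obtain w where w: "x = (\<Sum>j\<in>UNIV. lt$j * w$j)" "N w \<le> 1" using xin by auto
        have "\<alpha> * x = lt \<bullet> (\<alpha> *\<^sub>R w)"
          by (simp add: w(1) inner_vec_def sum_distrib_left algebra_simps)
        then have "\<alpha> * x + T * \<beta> = lt \<bullet> (\<alpha> *\<^sub>R w) + lt \<bullet> Bm a kk n zz"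
          using bz by simp
        also have "\<dots> \<le> Phi N \<rho> p n (\<alpha> *\<^sub>R w) zz" by (rule Qlt)
        also have "\<dots> = ((\<alpha> * N w) powr p + \<rho> * (\<Sum>j<n. \<bar>zz j\<bar>) powr p) powr (1/p)"
          using ab nscale[OF norm] by (simp add: Phi_def)
        also have "\<dots> \<le> (\<alpha> powr p + \<rho> * (\<beta> * c) powr p) powr (1/p)"
        proof (rule powr_mono2)
          show "0 \<le> 1/p" using p by simp
          show "0 \<le> (\<alpha> * N w) powr p + \<rho> * (\<Sum>j<n. \<bar>zz j\<bar>) powr p" using rho by simp
          have "(\<alpha> * N w) powr p \<le> \<alpha> powr p"
            using ab w(2) nge[OF norm, of w] p by (intro powr_mono2) (auto intro: mult_le_one simp: mult_left_le)
          moreover have "(\<Sum>j<n. \<bar>zz j\<bar>) powr p \<le> (\<beta> * c) powr p"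
            using sz p by (intro powr_mono2) (auto simp: sum_nonneg)
          ultimately show "(\<alpha> * N w) powr p + \<rho> * (\<Sum>j<n. \<bar>zz j\<bar>) powr p \<le> \<alpha> powr p + \<rho> * (\<beta> * c) powr p"
            using rho by (smt (verit) mult_left_mono)
        qed
        also have "\<dots> = (\<alpha> powr p + \<beta> powr p) powr (1/p)" by (simp add: rc)
        finally show ?thesis .
      qed
      have ne: "{(\<Sum>j\<in>UNIV. lt$j * y$j) | y. N y \<le> 1} \<noteq> {}"
        using nz[OF norm] by (auto intro!: exI[of _ 0])
      have "\<alpha> * dual_norm N lt + T * \<beta> \<le> (\<alpha> powr p + \<beta> powr p) powr (1/p)"
        unfolding dual_norm_def by (rule sup_lin[OF ne ab(1)]) (use W in blast)
      then show ?thesis by (simp add: mult.commute)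
    qed
    have "pair_norm p' (dual_norm N lt) T \<le> 1"
      by (rule revholder_pn[OF p p' dual_nonneg[OF norm] T0 H])
    then have "(\<Sum>j\<in>UNIV. y0$j * lt$j) \<le> D"
      using lam_opt[rule_format, of lt] supT by (simp add: D_def)
    moreover have "(\<Sum>j\<in>UNIV. y0$j * lt$j) = (1 - t) * D + t * V"
    proof -
      have "(\<Sum>j\<in>UNIV. y0$j * lt$j) = lt \<bullet> y0" by (simp add: inner_vec_def mult.commute)
      also have "\<dots> = (1 - t) * (lam \<bullet> y0) + t * (l' \<bullet> y0)"
        by (simp add: lt_def inner_add_left inner_diff_left algebra_simps)
      finally show ?thesis using Dinner l'(1) by simp
    qed
    ultimately have "t * V \<le> t * D" by (simp add: algebra_simps)
    then show ?thesis using t(1) by simp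
  qed
  show ?thesis using xs valx wdx VD by (metis order_trans)
qed

end
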